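(* In the setting below, suppose $0<\eta\le\frac{1}{L(K+1)}$. Then for every $k\ge0$ the iterates of the PIAG method satisfy \[ -\|d_k\|^2\le -\frac{\mu}{4}F_{k+1}+\eta L\sum_{j=(k-K)_+}^{k-1}\|d_j\|^2 . \]
   Context: Let $m,n\ge 1$ be integers and $\|\cdot\|$ the Euclidean norm on $\mathbb{R}^n$. For $i=1,\dots,m$, let $f_i:\mathbb{R}^n\to\mathbb{R}$ be continuously differentiable with $\|\nabla f_i(x)-\nabla f_i(y)\|\le L_i\|x-y\|$ for all $x,y$, where $L_i\ge 0$ (the $f_i$ are not assumed convex). Let $f=\frac1m\sum_{i=1}^m f_i$ and $L=\frac1m\sum_{i=1}^m L_i$. Assume $f$ is $\mu$-strongly convex for some $\mu>0$ (i.e. $x\mapsto f(x)-\frac{\mu}{2}\|x\|^2$ is convex). Let $r:\mathbb{R}^n\to(-\infty,\infty]$ be proper, closed and convex, let $F=f+r$, and let $x^*$ be the unique minimizer of $F$. For $\eta>0$ define $\mathrm{prox}_r^\eta(y)=\arg\min_{x\in\mathbb{R}^n}\{\frac12\|x-y\|^2+\eta r(x)\}$. PIAG method: fix an integer $K\ge 0$, a step size $\eta>0$ and $x_0\in\mathbb{R}^n$; for each $k\ge0$ and each $i$ let $\tau_{i,k}$ be any (deterministically chosen) integer with $\max(k-K,0)\le\tau_{i,k}\le k$; set $g_k=\frac1m\sum_{i=1}^m\nabla f_i(x_{\tau_{i,k}})$ and $x_{k+1}=\mathrm{prox}_r^\eta(x_k-\eta g_k)$. Define $d_k=(x_{k+1}-x_k)/\eta$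 and $F_k=F(x_k)-F(x^* )$. Write $(t)_+=\max(t,0)$; empty sums are zero. *)

theory Defs
  imports "HOL-Analysis.Analysis" "HOL-Library.Extended_Real"
begin

definition proper_fun :: "('a \<Rightarrow> ereal) \<Rightarrow> bool" where
  "proper_fun r \<longleftrightarrow> (\<forall>x. r x \<noteq> -\<infinity>) \<and> (\<exists>x. r x \<noteq> \<infinity>)"

definition epigraph_e :: "('a \<Rightarrow> ereal) \<Rightarrow> ('a \<times> real) set" where
  "epigraph_e r = {(x, t). r x \<le> ereal t}"

definition closed_fun :: "('a::topological_space \<Rightarrow> ereal) \<Rightarrow> bool" where
  "closed_fun r \<longleftrightarrow> closed (epigraph_e r)"

definition convex_fun :: "('a::real_vector \<Rightarrow> ereal) \<Rightarrow> bool" where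
  "convex_fun r \<longleftrightarrow> convex (epigraph_e r)"

definition prox :: "('a::real_normed_vector \<Rightarrow> ereal) \<Rightarrow> real \<Rightarrow> 'a \<Rightarrow> 'a" where
  "prox r \<eta> y = (THE x. \<forall>z. ereal (norm (x - y)^2 / 2) + ereal \<eta> * r x
                          \<le> ereal (norm (z - y)^2 / 2) + ereal \<eta> * r z)"

end

theory Submission
  imports Defs
begin


lemma r_fin:
  assumes "proper_fun r" "r z \<noteq> \<infinity>"
  shows "r z = ereal (real_of_ereal (r z))"
  using assms unfolding proper_fun_def by (cases "r z") auto

lemma r_conv:
  fixes r :: "'a::real_vector \<Rightarrow> ereal"
  assumes "proper_fun r" "convex_fun r" "r u \<noteq> \<infinity>" "r v \<noteq> \<infinity>" "0 \<le> t" "t \<le> 1"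
  shows "r ((1-t) *\<^sub>R u + t *\<^sub>R v) \<noteq> \<infinity> \<and>
         real_of_ereal (r ((1-t) *\<^sub>R u + t *\<^sub>R v)) \<le> (1-t) * real_of_ereal (r u) + t * real_of_ereal (r v)"
proof -
  have u: "(u, real_of_ereal (r u)) \<in> epigraph_e r"
    using r_fin[OF assms(1,3)] unfolding epigraph_e_def by simp
  have v: "(v, real_of_ereal (r v)) \<in> epigraph_e r"
    using r_fin[OF assms(1,4)] unfolding epigraph_e_def by simp
  have "(1-t) *\<^sub>R (u, real_of_ereal (r u)) + t *\<^sub>R (v, real_of_ereal (r v)) \<in> epigraph_e r"
    using assms(2,5,6) u v unfolding convex_fun_def by (intro convexD) auto
  then have h: "r ((1-t) *\<^sub>R u + t *\<^sub>R v) \<le> ereal ((1-t) * real_of_ereal (r u) + t * real_of_ereal (r v))"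
    unfolding epigraph_e_def by simp
  then have "r ((1-t) *\<^sub>R u + t *\<^sub>R v) \<noteq> \<infinity>" by auto
  moreover from h this have "real_of_ereal (r ((1-t) *\<^sub>R u + t *\<^sub>R v)) \<le> (1-t) * real_of_ereal (r u) + t * real_of_ereal (r v)"
    using r_fin[OF assms(1)] by (metis ereal_less_eq(3))
  ultimately show ?thesis by blast
qed

lemma affine_minorant:
  fixes r :: "'a::euclidean_space \<Rightarrow> ereal"
  assumes "proper_fun r" "convex_fun r" "closed_fun r"
  shows "\<exists>a b. \<forall>z. r z \<noteq> \<infinity> \<longrightarrow> inner a z + b \<le> real_of_ereal (r z)"
proof -
  obtain x0 where x0: "r x0 \<noteq> \<infinity>" using assms(1) unfolding proper_fun_def by auto
  define r0 where "r0 = real_of_ereal (r x0)"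
  have x0e: "r x0 = ereal r0" using r_fin[OF assms(1) x0] r0_def by simp
  have "(x0, r0 - 1) \<notin> epigraph_e r" using x0e unfolding epigraph_e_def by simp
  then obtain a b where ab: "inner a (x0, r0 - 1) < b" "\<forall>p\<in>epigraph_e r. inner a p > b"
    using separating_hyperplane_closed_point[of "epigraph_e r"] assms(2,3)
    unfolding convex_fun_def closed_fun_def by blast
  obtain a1 a2 where a: "a = (a1, a2)" by (cases a)
  have "(x0, r0) \<in> epigraph_e r" using x0e unfolding epigraph_e_def by simp
  then have h1: "inner a1 x0 + a2 * r0 > b" using ab a by (auto simp: inner_Pair)
  have h2: "inner a1 x0 + a2 * (r0 - 1) < b" using ab a by (auto simp: inner_Pair)
  from h1 h2 have a2: "a2 > 0" by (simp add: algebra_simps)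
  show ?thesis
  proof (intro exI allI impI)
    fix z assume z: "r z \<noteq> \<infinity>"
    have "(z, real_of_ereal (r z)) \<in> epigraph_e r"
      using r_fin[OF assms(1) z] unfolding epigraph_e_def by simp
    then have "inner a1 z + a2 * real_of_ereal (r z) > b" using ab a by (auto simp: inner_Pair)
    then show "inner (- (1/a2) *\<^sub>R a1) z + b / a2 \<le> real_of_ereal (r z)"
      using a2 by (simp add: field_simps)
  qed
qed



lemma small_t:
  fixes a b c :: real
  assumes "\<And>t. 0 < t \<Longrightarrow> t \<le> 1 \<Longrightarrow> a \<le> b + t * c"
  shows "a \<le> b"
proof (rule ccontr)
  assume "\<not> a \<le> b"
  define t where "t = min 1 ((a - b) / (2 * (\<bar>c\<bar> + 1)))"
  have t0: "0 < t" using \<open>\<not> a \<le> b\<close> unfolding t_def by (auto simp: field_simps)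
  have t1: "t \<le> 1" unfolding t_def by simp
  have "t * c \<le> t * (\<bar>c\<bar> + 1)" using t0 by (intro mult_left_mono) auto
  also have "\<dots> \<le> (a - b) / (2 * (\<bar>c\<bar> + 1)) * (\<bar>c\<bar> + 1)"
    by (intro mult_right_mono) (auto simp: t_def)
  also have "\<dots> = (a - b) / 2" by (simp add: field_simps)
  finally have "t * c \<le> (a - b)/2" .
  with assms[OF t0 t1] \<open>\<not> a \<le> b\<close> show False by argo
qed

lemma prox_exists:
  fixes r :: "'a::euclidean_space \<Rightarrow> ereal"
  assumes pr: "proper_fun r" and cv: "convex_fun r" and cl: "closed_fun r" and eta: "\<eta> > 0"
  shows "\<exists>p. r p \<noteq> \<infinity> \<and> (\<forall>z. r z \<noteq> \<infinity> \<longrightarrow>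
     norm (p - y)^2/2 + \<eta> * real_of_ereal (r p) \<le> norm (z - y)^2/2 + \<eta> * real_of_ereal (r z))"
proof -
  define \<psi> where "\<psi> z = norm (z - y)^2/2 + \<eta> * real_of_ereal (r z)" for z
  obtain a b where ab: "\<And>z. r z \<noteq> \<infinity> \<Longrightarrow> inner a z + b \<le> real_of_ereal (r z)"
    using affine_minorant[OF pr cv cl] by blast
  obtain x0 where x0: "r x0 \<noteq> \<infinity>" using pr unfolding proper_fun_def by auto
  define c0 where "c0 = \<psi> x0"
  define E where "E = {(z,t). r z \<noteq> \<infinity> \<and> \<psi> z \<le> t \<and> t \<le> c0}"
  define G where "G p = (fst p, (snd p - norm (fst p - y)^2/2) / \<eta>)" for p :: "'a \<times> real"
  have E_iff: "(z,t) \<in> E \<longleftrightarrow> (z,t) \<in> G -` epigraph_e r \<inter> snd -` {..c0}" for z t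
  proof
    assume "(z,t) \<in> E"
    then have "r z \<noteq> \<infinity>" "\<psi> z \<le> t" "t \<le> c0" unfolding E_def by auto
    moreover have "real_of_ereal (r z) \<le> (t - norm (z - y)^2/2) / \<eta>"
      using \<open>\<psi> z \<le> t\<close> eta unfolding \<psi>_def by (simp add: field_simps)
    ultimately show "(z,t) \<in> G -` epigraph_e r \<inter> snd -` {..c0}"
      using r_fin[OF pr \<open>r z \<noteq> \<infinity>\<close>]
      unfolding G_def epigraph_e_def by (auto, metis ereal_less_eq(3))
  next
    assume h: "(z,t) \<in> G -` epigraph_e r \<inter> snd -` {..c0}"
    then have h1: "r z \<le> ereal ((t - norm (z - y)^2/2) / \<eta>)" unfolding G_def epigraph_e_def by auto
    then have rz: "r z \<noteq> \<infinity>" by auto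
    have "real_of_ereal (r z) \<le> (t - norm (z - y)^2/2) / \<eta>"
      using h1 r_fin[OF pr rz] by (metis ereal_less_eq(3))
    then show "(z,t) \<in> E" using h rz eta unfolding E_def \<psi>_def by (auto simp: field_simps)
  qed
  have E_eq: "E = G -` epigraph_e r \<inter> snd -` {..c0}"
    by (intro set_eqI) (metis E_iff prod.collapse)
  have contG: "continuous (at p) G" for p unfolding G_def using eta by (intro continuous_intros) auto
  have closedE: "closed E" unfolding E_eq
    using cl unfolding closed_fun_def
    by (intro closed_Int continuous_closed_vimage contG closed_vimage_snd) auto
  define C where "C = c0 - \<eta> * (inner a y + b)"
  define R where "R = 1 + 2 * \<bar>C\<bar> + 2 * \<eta> * norm a"
  define lo where "lo = - \<eta> * (norm a * (norm y + R) + \<bar>b\<bar>)"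
  have Esub_pt: "z \<in> cball y R \<and> lo \<le> t \<and> t \<le> c0" if zt: "(z,t) \<in> E" for z t
  proof -
    from zt have rz: "r z \<noteq> \<infinity>" and le: "\<psi> z \<le> t" and tc: "t \<le> c0" unfolding E_def by auto
    have low: "norm (z - y)^2/2 + \<eta> * (inner a z + b) \<le> t"
      using le ab[OF rz] eta unfolding \<psi>_def
      by (smt (verit, best) mult_left_mono)
    define n where "n = norm (z - y)"
    have n0: "n \<ge> 0" unfolding n_def by simp
    have "inner a z = inner a (z - y) + inner a y" by (simp add: inner_diff_right)
    moreover have "inner a (z - y) \<ge> - (norm a * n)"
      unfolding n_def using Cauchy_Schwarz_ineq2[of a "z-y"] by (smt (verit) abs_le_iff norm_ge_zero)
    ultimately have "inner a z \<ge> inner a y - norm a * n" by simp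
    then have "\<eta> * inner a z \<ge> \<eta> * inner a y - \<eta> * norm a * n" using eta
      by (smt (verit, ccfv_SIG) mult.assoc mult_left_mono right_diff_distrib)
    then have key: "n^2 / 2 - \<eta> * norm a * n \<le> C" using low tc unfolding C_def n_def
      by (simp add: algebra_simps)
    have nR: "n \<le> R"
    proof (rule ccontr)
      assume "\<not> n \<le> R"
      then have nbig: "n > R" by simp
      have R1: "R \<ge> 1" unfolding R_def using eta by simp
      have "n * n > n * R" using nbig R1 by (intro mult_strict_left_mono) auto
      moreover have "n * R = n + 2*\<bar>C\<bar>*n + 2*(\<eta>*norm a)*n" unfolding R_def by (simp add: algebra_simps)
      moreover have "2*\<bar>C\<bar>*n \<ge> 2*\<bar>C\<bar>" using nbig R1 by (simp add: mult_le_cancel_left1)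
      ultimately have "n^2 > 2*C + 2*(\<eta>*norm a)*n + n" by (simp add: power2_eq_square)
      with key n0 show False by simp
    qed
    then have A1: "z \<in> cball y R" unfolding n_def by (simp add: dist_norm norm_minus_commute)
    have nz: "norm z \<le> norm y + R" using nR norm_triangle_ineq[of y "z-y"] unfolding n_def by simp
    have "inner a z \<ge> - (norm a * norm z)" using Cauchy_Schwarz_ineq2[of a z] by (smt (verit) abs_le_iff norm_ge_zero)
    moreover have "norm a * norm z \<le> norm a * (norm y + R)" using nz by (simp add: mult_left_mono)
    ultimately have "inner a z + b \<ge> - (norm a * (norm y + R) + \<bar>b\<bar>)" by linarith
    then have "\<eta> * (inner a z + b) \<ge> \<eta> * (- (norm a * (norm y + R) + \<bar>b\<bar>))" using eta
      by (intro mult_left_mono) auto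
    moreover have "0 \<le> norm (z - y)^2/2" by simp
    moreover have "lo = \<eta> * (- (norm a * (norm y + R) + \<bar>b\<bar>))" unfolding lo_def by (simp add: algebra_simps)
    ultimately have "lo \<le> t" using low by linarith
    with A1 tc show ?thesis by blast
  qed
  have Esub: "E \<subseteq> cball y R \<times> {lo..c0}"
  proof
    fix pt assume "pt \<in> E"
    then show "pt \<in> cball y R \<times> {lo..c0}"
      using Esub_pt[of "fst pt" "snd pt"] by (simp add: mem_Times_iff)
  qed
  have "bounded E" using Esub
    by (rule bounded_subset[OF bounded_Times[OF bounded_cball compact_imp_bounded[OF compact_Icc]]])
  then have compE: "compact E" using closedE by (simp add: compact_eq_bounded_closed)
  have x0E: "(x0, c0) \<in> E" using x0 unfolding E_def c0_def by simp
  obtain pt where ptE: "pt \<in> E" and ptmin: "\<And>q. q \<in> E \<Longrightarrow> snd pt \<le> snd q"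
    using continuous_attains_inf[OF compE _ continuous_on_snd[OF continuous_on_id]] x0E by blast
  obtain p tp where pt: "pt = (p, tp)" by (cases pt)
  have rp: "r p \<noteq> \<infinity>" and ptp: "\<psi> p \<le> tp" and tpc: "tp \<le> c0" using ptE pt unfolding E_def by auto
  show ?thesis
  proof (intro exI conjI allI impI)
    show "r p \<noteq> \<infinity>" by fact
    fix z assume rz: "r z \<noteq> \<infinity>"
    show "norm (p - y)^2/2 + \<eta> * real_of_ereal (r p) \<le> norm (z - y)^2/2 + \<eta> * real_of_ereal (r z)"
    proof (cases "\<psi> z \<le> c0")
      case True
      then have "(z, \<psi> z) \<in> E" using rz unfolding E_def by auto
      then have "tp \<le> \<psi> z" using ptmin pt by fastforce
      then show ?thesis using ptp unfolding \<psi>_def by linarith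
    next
      case False then show ?thesis using ptp tpc unfolding \<psi>_def by linarith
    qed
  qed
qed



lemma norm_plus_scale_sq:
  fixes u v :: "'a::real_inner"
  shows "norm (u + t *\<^sub>R v)^2 = norm u^2 + 2 * t * inner u v + t^2 * norm v^2"
  unfolding power2_norm_eq_inner by (simp add: inner_add_left inner_add_right inner_commute power2_eq_square algebra_simps)

lemma real_aux1:
  fixes a t \<eta> rp rz I N :: real
  assumes "a/2 + \<eta> * rp \<le> (a + 2 * t * I + t^2 * N)/2 + \<eta> * ((1-t) * rp + t * rz)"
  shows "t * (\<eta> * (rp - rz)) \<le> t * (I + t * (N/2))"
proof -
  have "(a + 2 * t * I + t^2 * N)/2 = a/2 + t*I + t*(t*(N/2))" by (simp add: power2_eq_square field_simps)
  moreover have "\<eta> * ((1-t) * rp + t * rz) = \<eta> * rp - t * (\<eta> * (rp - rz))" by (simp add: algebra_simps)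
  moreover have "t * (I + t * (N/2)) = t*I + t*(t*(N/2))" by (simp add: algebra_simps)
  ultimately show ?thesis using assms by linarith
qed

lemma min_subgrad:
  fixes r :: "'a::euclidean_space \<Rightarrow> ereal"
  assumes pr: "proper_fun r" and cv: "convex_fun r" and eta: "\<eta> > 0"
    and rp: "r p \<noteq> \<infinity>"
    and pmin: "\<And>z. r z \<noteq> \<infinity> \<Longrightarrow>
       norm (p - y)^2/2 + \<eta> * real_of_ereal (r p) \<le> norm (z - y)^2/2 + \<eta> * real_of_ereal (r z)"
    and rz: "r z \<noteq> \<infinity>"
  shows "\<eta> * (real_of_ereal (r p) - real_of_ereal (r z)) \<le> inner (p - y) (z - p)"
proof (rule small_t)
  fix t :: real assume t0: "0 < t" and t1: "t \<le> 1"
  define zt where "zt = (1-t) *\<^sub>R p + t *\<^sub>R z"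
  have cvx: "r zt \<noteq> \<infinity>" "real_of_ereal (r zt) \<le> (1-t) * real_of_ereal (r p) + t * real_of_ereal (r z)"
    using r_conv[OF pr cv rp rz, of t] t0 t1 unfolding zt_def by auto
  have eq: "zt - y = (p - y) + t *\<^sub>R (z - p)" unfolding zt_def by (simp add: algebra_simps)
  have n: "norm (zt - y)^2 = norm (p - y)^2 + 2 * t * inner (p - y) (z - p) + t^2 * norm (z - p)^2"
    unfolding eq by (rule norm_plus_scale_sq)
  have "norm (p - y)^2/2 + \<eta> * real_of_ereal (r p) \<le> norm (zt - y)^2/2 + \<eta> * real_of_ereal (r zt)"
    using pmin[OF cvx(1)] .
  also have "\<dots> \<le> norm (zt - y)^2/2 + \<eta> * ((1-t) * real_of_ereal (r p) + t * real_of_ereal (r z))"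
    using cvx(2) eta by (intro add_left_mono mult_left_mono) auto
  finally have "norm (p - y)^2/2 + \<eta> * real_of_ereal (r p) \<le> (norm (p - y)^2 + 2 * t * inner (p - y) (z - p) + t^2 * norm (z - p)^2)/2 + \<eta> * ((1-t) * real_of_ereal (r p) + t * real_of_ereal (r z))"
    unfolding n .
  then have "t * (\<eta> * (real_of_ereal (r p) - real_of_ereal (r z))) \<le> t * (inner (p - y) (z - p) + t * (norm (z - p)^2/2))"
    by (rule real_aux1)
  then show "\<eta> * (real_of_ereal (r p) - real_of_ereal (r z)) \<le> inner (p - y) (z - p) + t * (norm (z - p)^2/2)"
    using t0 by simp
qed

lemma prox_char:
  fixes r :: "'a::euclidean_space \<Rightarrow> ereal"
  assumes pr: "proper_fun r" and cv: "convex_fun r" and cl: "closed_fun r" and eta: "\<eta> > 0"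
  shows "r (prox r \<eta> y) \<noteq> \<infinity> \<and> (\<forall>z. r z \<noteq> \<infinity> \<longrightarrow>
     \<eta> * (real_of_ereal (r (prox r \<eta> y)) - real_of_ereal (r z)) \<le> inner (prox r \<eta> y - y) (z - prox r \<eta> y))"
proof -
  define \<psi> where "\<psi> z = norm (z - y)^2/2 + \<eta> * real_of_ereal (r z)" for z
  define \<Phi> where "\<Phi> z = ereal (norm (z - y)^2 / 2) + ereal \<eta> * r z" for z
  have Phi_fin: "\<Phi> z = ereal (\<psi> z)" if "r z \<noteq> \<infinity>" for z
    unfolding \<Phi>_def \<psi>_def by (subst r_fin[OF pr that]) simp
  have Phi_inf: "\<Phi> z = \<infinity>" if "r z = \<infinity>" for z
    using that eta unfolding \<Phi>_def by simp
  obtain p where rp: "r p \<noteq> \<infinity>" and pmin: "\<And>z. r z \<noteq> \<infinity> \<Longrightarrow> \<psi> p \<le> \<psi> z"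
    using prox_exists[OF pr cv cl eta, of y] unfolding \<psi>_def by blast
  have P: "\<forall>z. \<Phi> p \<le> \<Phi> z"
  proof
    fix z show "\<Phi> p \<le> \<Phi> z"
    proof (cases "r z = \<infinity>")
      case True then show ?thesis by (simp add: Phi_inf)
    next
      case False then show ?thesis by (simp add: Phi_fin[OF rp] Phi_fin[OF False] pmin)
    qed
  qed
  have uniq: "x = p" if Px: "\<forall>z. \<Phi> x \<le> \<Phi> z" for x
  proof -
    have "\<Phi> x \<le> \<Phi> p" using Px by blast
    have rx: "r x \<noteq> \<infinity>"
    proof
      assume "r x = \<infinity>"
      then have "\<Phi> x = \<infinity>" by (rule Phi_inf)
      with \<open>\<Phi> x \<le> \<Phi> p\<close> Phi_fin[OF rp] show False by simp
    qed
    have xmin: "\<psi> x \<le> \<psi> z" if "r z \<noteq> \<infinity>" for z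
    proof -
      have "\<Phi> x \<le> \<Phi> z" using Px by blast
      then show ?thesis unfolding Phi_fin[OF rx] Phi_fin[OF that] by simp
    qed
    have s1: "\<eta> * (real_of_ereal (r p) - real_of_ereal (r x)) \<le> inner (p - y) (x - p)"
      by (rule min_subgrad[OF pr cv eta rp _ rx]) (use pmin in \<open>auto simp: \<psi>_def\<close>)
    have s2: "\<eta> * (real_of_ereal (r x) - real_of_ereal (r p)) \<le> inner (x - y) (p - x)"
      by (rule min_subgrad[OF pr cv eta rx _ rp]) (use xmin in \<open>auto simp: \<psi>_def\<close>)
    have "inner (p - y) (x - p) + inner (x - y) (p - x) = - (norm (x - p)^2)"
      by (simp add: power2_norm_eq_inner inner_diff_left inner_diff_right inner_commute algebra_simps)
    moreover have "\<eta> * (real_of_ereal (r p) - real_of_ereal (r x)) + \<eta> * (real_of_ereal (r x) - real_of_ereal (r p)) = 0"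
      by (simp add: algebra_simps)
    ultimately have "norm (x - p)^2 \<le> 0" using s1 s2 by linarith
    then show "x = p" by simp
  qed
  have "prox r \<eta> y = (THE x. \<forall>z. \<Phi> x \<le> \<Phi> z)" unfolding prox_def \<Phi>_def ..
  also have "\<dots> = p" by (rule the_equality[where P="\<lambda>x. \<forall>z. \<Phi> x \<le> \<Phi> z", OF P uniq])
  finally have "prox r \<eta> y = p" .
  moreover have "\<forall>z. r z \<noteq> \<infinity> \<longrightarrow> \<eta> * (real_of_ereal (r p) - real_of_ereal (r z)) \<le> inner (p - y) (z - p)"
  proof (intro allI impI)
    fix z assume "r z \<noteq> \<infinity>"
    show "\<eta> * (real_of_ereal (r p) - real_of_ereal (r z)) \<le> inner (p - y) (z - p)"
      by (rule min_subgrad[OF pr cv eta rp _ \<open>r z \<noteq> \<infinity>\<close>]) (use pmin in \<open>simp add: \<psi>_def\<close>)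
  qed
  ultimately show ?thesis using rp by simp
qed



lemma tangent:
  fixes h :: "'a::real_normed_vector \<Rightarrow> real"
  assumes cvx: "convex_on UNIV h" and der: "(h has_derivative Dh) (at x)"
  shows "h x + Dh (y - x) \<le> h y"
proof -
  define v where "v = y - x"
  define \<phi> where "\<phi> t = h (x + t *\<^sub>R v)" for t :: real
  have cphi: "convex_on UNIV \<phi>"
  proof (rule convex_onI)
    fix t a b :: real assume "0 < t" "t < 1"
    have "x + ((1 - t) *\<^sub>R a + t *\<^sub>R b) *\<^sub>R v = (1 - t) *\<^sub>R (x + a *\<^sub>R v) + t *\<^sub>R (x + b *\<^sub>R v)"
      by (simp add: algebra_simps)
    then show "\<phi> ((1 - t) *\<^sub>R a + t *\<^sub>R b) \<le> (1 - t) * \<phi> a + t * \<phi> b"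
      unfolding \<phi>_def using convex_onD[OF cvx, of t] \<open>0 < t\<close> \<open>t < 1\<close> by simp
  qed simp
  have bl: "bounded_linear Dh" using der by (rule has_derivative_bounded_linear)
  have d1: "((\<lambda>t. x + t *\<^sub>R v) has_derivative (\<lambda>s. s *\<^sub>R v)) (at 0)"
    by (auto intro!: derivative_eq_intros)
  have der': "(h has_derivative Dh) (at (x + (0::real) *\<^sub>R v))" using der by simp
  have "(\<phi> has_derivative (\<lambda>s. Dh (s *\<^sub>R v))) (at 0)"
    unfolding \<phi>_def using has_derivative_compose[OF d1 der'] by simp
  moreover have "(\<lambda>s. Dh (s *\<^sub>R v)) = (*) (Dh v)"
    using bl by (auto simp: fun_eq_iff linear_simps)
  ultimately have "(\<phi> has_field_derivative Dh v) (at 0 within UNIV)"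
    by (simp add: has_field_derivative_def)
  from convex_on_imp_above_tangent[OF cphi connected_UNIV _ _ this, of 1]
  have "\<phi> 1 - \<phi> 0 \<ge> Dh v" by simp
  then show ?thesis unfolding \<phi>_def v_def by simp
qed

lemma final_real:
  fixes \<Delta> S n A Q c e \<mu> :: real
  assumes mu: "\<mu> > 0" and D: "\<Delta> \<le> S^2 / (2*\<mu>)" and S0: "0 \<le> S"
    and S: "S \<le> (1 + e) * n + e * A" and A0: "0 \<le> A" and n0: "0 \<le> n"
    and AQ: "A^2 \<le> Q * c" and Q0: "0 \<le> Q" and c0: "0 \<le> c"
    and e0: "0 \<le> e" and ec: "e * (c + 1) \<le> 1"
  shows "- (n^2) \<le> - (\<mu>/4) * \<Delta> + e * Q"
proof -
  have "e * c \<ge> 0" using e0 c0 by simp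
  then have e1: "e \<le> 1" using ec by (simp add: algebra_simps)
  have ec': "e * c \<le> 1" using ec e0 by (simp add: algebra_simps)
  have "S^2 \<le> ((1 + e) * n + e * A)^2" using S S0 by (intro power_mono) auto
  also have "\<dots> \<le> 2 * ((1 + e) * n)^2 + 2 * (e * A)^2"
    by (smt (verit) zero_le_power2 power2_sum power2_diff)
  also have "((1 + e) * n)^2 \<le> (2 * n)^2" using e1 e0 n0 by (intro power_mono mult_right_mono) auto
  also have "(e * A)^2 = e * (e * A^2)" by (simp add: power2_eq_square)
  also have "e * A^2 \<le> e * (Q * c)" using AQ e0 by (intro mult_left_mono)
  also have "e * (Q * c) = Q * (e * c)" by simp
  also have "Q * (e * c) \<le> Q" using ec' Q0 by (simp add: mult_left_le)
  finally have S2: "S^2 \<le> 8 * n^2 + 2 * (e * Q)" using e0 by (simp add: power2_eq_square mult_left_mono)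
  have "\<mu> * \<Delta> \<le> S^2 / 2" using D mu by (simp add: field_simps)
  then have "\<mu> * \<Delta> / 4 \<le> n^2 + e * Q / 4" using S2 by simp
  moreover have "e * Q \<ge> 0" using e0 Q0 by simp
  ultimately show ?thesis by simp
qed

lemma quad_bound:
  fixes a b \<mu> :: real
  assumes "\<mu> > 0"
  shows "- (a^2 / (2 * \<mu>)) \<le> \<mu> / 2 * b^2 - a * b"
proof -
  have "0 \<le> (\<mu> * b - a)^2" by simp
  then have "0 \<le> \<mu>^2 * b^2 - 2 * \<mu> * a * b + a^2" by (simp add: power2_eq_square algebra_simps)
  then show ?thesis using assms by (simp add: field_simps power2_eq_square)
qed



theorem lemma3:
  fixes m K :: nat
    and fs :: "nat \<Rightarrow> 'a::euclidean_space \<Rightarrow> real"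
    and gf :: "nat \<Rightarrow> 'a \<Rightarrow> 'a"
    and Ls :: "nat \<Rightarrow> real"
    and f :: "'a \<Rightarrow> real"
    and L \<mu> \<eta> :: real
    and r :: "'a \<Rightarrow> ereal"
    and F :: "'a \<Rightarrow> ereal"
    and xs :: 'a
    and \<tau> :: "nat \<Rightarrow> nat \<Rightarrow> nat"
    and x :: "nat \<Rightarrow> 'a"
    and g d :: "nat \<Rightarrow> 'a"
    and k :: nat
  assumes m_pos: "m \<ge> 1"
    and grad: "\<And>i y. i < m \<Longrightarrow> (fs i has_derivative (\<lambda>h. gf i y \<bullet> h)) (at y)"
    and grad_cont: "\<And>i. i < m \<Longrightarrow> continuous_on UNIV (gf i)"
    and Ls_nonneg: "\<And>i. i < m \<Longrightarrow> Ls i \<ge> 0"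
    and lip: "\<And>i y z. i < m \<Longrightarrow> norm (gf i y - gf i z) \<le> Ls i * norm (y - z)"
    and f_def: "f = (\<lambda>y. (1 / real m) * (\<Sum>i<m. fs i y))"
    and L_def: "L = (1 / real m) * (\<Sum>i<m. Ls i)"
    and mu_pos: "\<mu> > 0"
    and strong: "convex_on UNIV (\<lambda>y. f y - \<mu> / 2 * (norm y)^2)"
    and r_proper: "proper_fun r"
    and r_closed: "closed_fun r"
    and r_convex: "convex_fun r"
    and F_def: "F = (\<lambda>y. ereal (f y) + r y)"
    and xs_min: "\<And>y. F xs \<le> F y"
    and eta_pos: "\<eta> > 0"
    and eta_le: "\<eta> * (L * (real K + 1)) \<le> 1"
    and tau_lo: "\<And>i j. i < m \<Longrightarrow> j - K \<le> \<tau> i j"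
    and tau_hi: "\<And>i j. i < m \<Longrightarrow> \<tau> i j \<le> j"
    and g_def: "\<And>j. g j = (1 / real m) *\<^sub>R (\<Sum>i<m. gf i (x (\<tau> i j)))"
    and x_step: "\<And>j. x (Suc j) = prox r \<eta> (x j - \<eta> *\<^sub>R g j)"
    and d_def: "\<And>j. d j = (1 / \<eta>) *\<^sub>R (x (Suc j) - x j)"
  shows "ereal (- ((norm (d k))^2))
           \<le> ereal (- (\<mu> / 4)) * (F (x (Suc k)) - F xs)
             + ereal (\<eta> * L * (\<Sum>j\<in>{k - K..<k}. (norm (d j))^2))"
proof -
  define rr where "rr z = real_of_ereal (r z)" for z
  define x1 where "x1 = x (Suc k)"
  define yk where "yk = x k - \<eta> *\<^sub>R g k"
  have pc: "r (prox r \<eta> yk) \<noteq> \<infinity> \<and> (\<forall>z. r z \<noteq> \<infinity> \<longrightarrow>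
     \<eta> * (real_of_ereal (r (prox r \<eta> yk)) - real_of_ereal (r z)) \<le> inner (prox r \<eta> yk - yk) (z - prox r \<eta> yk))"
    by (rule prox_char[OF r_proper r_convex r_closed eta_pos])
  have x1eq: "prox r \<eta> yk = x1" using x_step unfolding x1_def yk_def by simp
  have r1: "r x1 \<noteq> \<infinity>" using pc x1eq by simp
  have sub: "\<And>z. r z \<noteq> \<infinity> \<Longrightarrow> \<eta> * (rr x1 - rr z) \<le> inner (x1 - yk) (z - x1)"
    using pc x1eq unfolding rr_def by simp
  have F1: "F x1 = ereal (f x1 + rr x1)"
    unfolding F_def rr_def by (subst r_fin[OF r_proper r1]) simp
  have rs: "r xs \<noteq> \<infinity>"
  proof
    assume "r xs = \<infinity>"
    then have "F xs = \<infinity>" unfolding F_def by simp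
    with xs_min[of x1] F1 show False by simp
  qed
  have Fs: "F xs = ereal (f xs + rr xs)"
    unfolding F_def rr_def by (subst r_fin[OF r_proper rs]) simp
  have dstep: "x (Suc j) - x j = \<eta> *\<^sub>R d j" for j
    using d_def[of j] eta_pos by simp
  have x1y: "x1 - yk = \<eta> *\<^sub>R (d k + g k)"
    using dstep[of k] unfolding x1_def yk_def by (simp add: algebra_simps)
  have "\<eta> * (rr x1 - rr xs) \<le> \<eta> * inner (d k + g k) (xs - x1)"
    using sub[OF rs] unfolding x1y by simp
  then have subxs: "rr x1 - rr xs \<le> inner (d k + g k) (xs - x1)"
    using eta_pos by simp
  define G where "G z = (1 / real m) *\<^sub>R (\<Sum>i<m. gf i z)" for z
  have fder: "(f has_derivative (\<lambda>w. inner (G z) w)) (at z)" for z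
  proof -
    have "((\<lambda>y. \<Sum>i<m. fs i y) has_derivative (\<lambda>w. \<Sum>i<m. inner (gf i z) w)) (at z)"
      by (rule has_derivative_sum) (use grad in auto)
    then have "((\<lambda>y. (1 / real m) * (\<Sum>i<m. fs i y)) has_derivative (\<lambda>w. (1 / real m) * (\<Sum>i<m. inner (gf i z) w))) (at z)"
      by (rule has_derivative_mult_right)
    then show ?thesis unfolding f_def
      by (rule has_derivative_eq_rhs) (simp add: G_def fun_eq_iff inner_sum_left)
  qed
  define hh where "hh y = f y - \<mu> / 2 * inner y y" for y
  have hconv: "convex_on UNIV hh"
    using strong unfolding hh_def by (simp add: power2_norm_eq_inner)
  have "((\<lambda>y. inner y y) has_derivative (\<lambda>w. inner w x1 + inner x1 w)) (at x1)"
    by (intro derivative_eq_intros) auto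
  then have "((\<lambda>y. \<mu> / 2 * inner y y) has_derivative (\<lambda>w. \<mu> / 2 * (inner w x1 + inner x1 w))) (at x1)"
    by (rule has_derivative_mult_right)
  from has_derivative_diff[OF fder this]
  have hder: "(hh has_derivative (\<lambda>w. inner (G x1) w - \<mu> / 2 * (inner w x1 + inner x1 w))) (at x1)"
    unfolding hh_def by simp
  have tg: "hh x1 + (inner (G x1) (xs - x1) - \<mu> / 2 * (inner (xs - x1) x1 + inner x1 (xs - x1))) \<le> hh xs"
    using tangent[OF hconv hder, of xs] by simp
  have nrm: "norm (xs - x1)^2 = inner xs xs - 2 * inner x1 xs + inner x1 x1"
    by (simp add: power2_norm_eq_inner inner_diff_left inner_diff_right inner_commute)
  have fstrong: "f x1 + inner (G x1) (xs - x1) + \<mu> / 2 * norm (xs - x1)^2 \<le> f xs"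
    using tg unfolding hh_def nrm
    by (simp add: inner_diff_left inner_diff_right inner_commute algebra_simps)
  define s where "s = G x1 - g k - d k"
  define w where "w = xs - x1"
  have "(f xs + rr xs) - (f x1 + rr x1) \<ge> inner s w + \<mu> / 2 * norm w ^2"
    using fstrong subxs unfolding s_def w_def by (simp add: inner_diff_left inner_add_left)
  moreover have "inner s w \<ge> - (norm s * norm w)"
    using norm_cauchy_schwarz[of "-s" w] by simp
  moreover have "- (norm s ^2 / (2 * \<mu>)) \<le> \<mu> / 2 * norm w ^2 - norm s * norm w"
    by (rule quad_bound[OF mu_pos])
  ultimately have Delta: "(f x1 + rr x1) - (f xs + rr xs) \<le> norm s ^2 / (2 * \<mu>)" by linarith
  have Lnn: "L \<ge> 0" unfolding L_def using Ls_nonneg by (intro mult_nonneg_nonneg sum_nonneg) auto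
  define T where "T = (\<Sum>j\<in>{k - K..<Suc k}. norm (d j))"
  define A where "A = (\<Sum>j\<in>{k - K..<k}. norm (d j))"
  define Q where "Q = (\<Sum>j\<in>{k - K..<k}. (norm (d j))^2)"
  have TA: "T = A + norm (d k)" unfolding T_def A_def by simp
  have tele: "norm (x1 - x (\<tau> i k)) \<le> \<eta> * T" if im: "i < m" for i
  proof -
    have le1: "\<tau> i k \<le> Suc k" using tau_hi[OF im, of k] by simp
    have "x1 - x (\<tau> i k) = (\<Sum>j=\<tau> i k..<Suc k. x (Suc j) - x j)"
      unfolding x1_def using sum_Suc_diff'[OF le1, of x] by simp
    also have "\<dots> = (\<Sum>j=\<tau> i k..<Suc k. \<eta> *\<^sub>R d j)" using dstep by simp
    finally have "norm (x1 - x (\<tau> i k)) = norm (\<Sum>j=\<tau> i k..<Suc k. \<eta> *\<^sub>R d j)" by simp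
    also have "\<dots> \<le> (\<Sum>j=\<tau> i k..<Suc k. norm (\<eta> *\<^sub>R d j))" by (rule norm_sum)
    also have "\<dots> = \<eta> * (\<Sum>j=\<tau> i k..<Suc k. norm (d j))" using eta_pos by (simp add: sum_distrib_left del: sum.op_ivl_Suc)
    also have "\<dots> \<le> \<eta> * T" unfolding T_def using tau_lo[OF im, of k] eta_pos
      by (intro mult_left_mono sum_mono2) auto
    finally show ?thesis .
  qed
  have Geq: "G x1 - g k = (1 / real m) *\<^sub>R (\<Sum>i<m. gf i x1 - gf i (x (\<tau> i k)))"
    by (simp add: G_def g_def sum_subtractf scaleR_diff_right)
  have "norm (G x1 - g k) = (1 / real m) * norm (\<Sum>i<m. gf i x1 - gf i (x (\<tau> i k)))"
    unfolding Geq by simp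
  also have "\<dots> \<le> (1 / real m) * (\<Sum>i<m. norm (gf i x1 - gf i (x (\<tau> i k))))"
    by (intro mult_left_mono norm_sum) auto
  also have "\<dots> \<le> (1 / real m) * (\<Sum>i<m. Ls i * (\<eta> * T))"
  proof (intro mult_left_mono sum_mono)
    fix i assume "i \<in> {..<m}"
    then have im: "i < m" by simp
    have "norm (gf i x1 - gf i (x (\<tau> i k))) \<le> Ls i * norm (x1 - x (\<tau> i k))" by (rule lip[OF im])
    also have "\<dots> \<le> Ls i * (\<eta> * T)" using tele[OF im] Ls_nonneg[OF im] by (rule mult_left_mono)
    finally show "norm (gf i x1 - gf i (x (\<tau> i k))) \<le> Ls i * (\<eta> * T)" .
  qed simp
  also have "\<dots> = L * (\<eta> * T)" unfolding L_def by (simp add: sum_distrib_right)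
  finally have Gg: "norm (G x1 - g k) \<le> L * (\<eta> * T)" .
  have "norm s \<le> norm (G x1 - g k) + norm (d k)" unfolding s_def by (rule norm_triangle_ineq4)
  also have "\<dots> \<le> L * (\<eta> * (A + norm (d k))) + norm (d k)" using Gg TA by simp
  finally have Sb: "norm s \<le> (1 + \<eta> * L) * norm (d k) + \<eta> * L * A" by (simp add: algebra_simps)
  have AQ: "A^2 \<le> Q * real (card {k - K..<k})" unfolding A_def Q_def by (rule sum_squared_le_sum_of_squares)
  have cK: "real (card {k - K..<k}) \<le> real K" by simp
  have A0: "0 \<le> A" unfolding A_def by (simp add: sum_nonneg)
  have Q0: "0 \<le> Q" unfolding Q_def by (simp add: sum_nonneg)
  have e0: "0 \<le> \<eta> * L" using eta_pos Lnn by simp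
  have "\<eta> * L * (real (card {k - K..<k}) + 1) \<le> \<eta> * L * (real K + 1)"
    using cK e0 by (intro mult_left_mono) auto
  also have "\<dots> \<le> 1" using eta_le by (simp add: algebra_simps)
  finally have ec: "\<eta> * L * (real (card {k - K..<k}) + 1) \<le> 1" .
  have fin: "- ((norm (d k))^2) \<le> - (\<mu>/4) * ((f x1 + rr x1) - (f xs + rr xs)) + \<eta> * L * Q"
    by (rule final_real[OF mu_pos Delta norm_ge_zero Sb A0 norm_ge_zero AQ Q0 _ e0 ec]) simp
  show ?thesis
    unfolding x1_def[symmetric] F1 Fs Q_def[symmetric] using fin by simp
qed

end
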